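(* For every integer $m\ge2$ and every graph $G$, $\hom(S_{2,1^{m-2}};G)^{m}\ge \hom(S_{2,1^{m-1}};G)^{m-1}$. (For $m=2$ this is the path inequality $\hom(P_2;G)^2\ge\hom(P_3;G)$, where $P_\ell$ is the path with $\ell$ edges.)
   Context: All graphs are finite; $\hom(H;G)$ is the number of graph homomorphisms from $H$ to $G$. For $k\ge0$, $S_{2,1^k}$ is the tree with vertex set $\{1,\ldots,k+3\}$ and edge set $\{\{1,j\}:2\le j\le k+2\}\cup\{\{k+2,k+3\}\}$; note $S_{2,1^0}=P_2$ and $S_{2,1^1}=P_3$. *)

theory Defs
  imports Main "HOL-Library.FuncSet"
begin

definition simple_graph :: "'a set \<Rightarrow> ('a \<Rightarrow> 'a \<Rightarrow> bool) \<Rightarrow> bool" where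
  "simple_graph V E \<longleftrightarrow> finite V \<and> (\<forall>x y. E x y \<longrightarrow> E y x) \<and> (\<forall>x. \<not> E x x)
     \<and> (\<forall>x y. E x y \<longrightarrow> x \<in> V \<and> y \<in> V)"

definition hom_count :: "'a set \<Rightarrow> ('a \<Rightarrow> 'a \<Rightarrow> bool) \<Rightarrow> 'b set \<Rightarrow> ('b \<Rightarrow> 'b \<Rightarrow> bool) \<Rightarrow> nat" where
  "hom_count VH EH VG EG =
     card {f \<in> VH \<rightarrow>\<^sub>E VG. \<forall>x y. EH x y \<longrightarrow> EG (f x) (f y)}"

text \<open>The tree S_{2,1^k}: vertices {1..k+3}, edges {1,j} for 2 \<le> j \<le> k+2 and {k+2,k+3}.\<close>
definition S_verts :: "nat \<Rightarrow> nat set" where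
  "S_verts k = {1..k+3}"

definition S_edge :: "nat \<Rightarrow> nat \<Rightarrow> nat \<Rightarrow> bool" where
  "S_edge k x y \<longleftrightarrow>
     (x = 1 \<and> 2 \<le> y \<and> y \<le> k + 2) \<or> (y = 1 \<and> 2 \<le> x \<and> x \<le> k + 2)
     \<or> (x = k + 2 \<and> y = k + 3) \<or> (y = k + 2 \<and> x = k + 3)"

end

theory Submission
  imports Defs
begin

lemma lowerA:
  assumes G: "simple_graph V E" and u0: "u0 \<in> V"
  shows "card {v. E u0 v} ^ (k+1) \<le> hom_count (S_verts k) (S_edge k) V E"
proof -
  let ?N = "{v. E u0 v}"
  let ?H = "{f \<in> S_verts k \<rightarrow>\<^sub>E V. \<forall>x y. S_edge k x y \<longrightarrow> E (f x) (f y)}"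
  define \<phi> where "\<phi> g = (\<lambda>j. if j \<in> {1..k+3} then (if j = 1 \<or> j = k+3 then u0 else g j) else undefined)" for g :: "nat \<Rightarrow> 'a"
  have NV: "?N \<subseteq> V" using G unfolding simple_graph_def by auto
  have fin: "finite ?H"
  proof (rule finite_subset)
    show "?H \<subseteq> S_verts k \<rightarrow>\<^sub>E V" by auto
    show "finite (S_verts k \<rightarrow>\<^sub>E V)" using G unfolding simple_graph_def S_verts_def
      by (intro finite_PiE) auto
  qed
  have sym: "\<And>x y. E x y \<Longrightarrow> E y x" using G unfolding simple_graph_def by auto
  have img: "\<phi> ` ({2..k+2} \<rightarrow>\<^sub>E ?N) \<subseteq> ?H"
  proof
    fix f assume "f \<in> \<phi> ` ({2..k+2} \<rightarrow>\<^sub>E ?N)"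
    then obtain g where g: "g \<in> {2..k+2} \<rightarrow>\<^sub>E ?N" and f: "f = \<phi> g" by auto
    have gN: "\<And>j. j \<in> {2..k+2} \<Longrightarrow> E u0 (g j)" using g by auto
    have gV: "\<And>j. 2 \<le> j \<Longrightarrow> j \<le> k+2 \<Longrightarrow> g j \<in> V" using gN NV by auto
    have "f \<in> S_verts k \<rightarrow>\<^sub>E V"
      unfolding f \<phi>_def S_verts_def
    proof (intro PiE_I)
      fix j assume j: "j \<in> {1..k+3}"
      show "(if j \<in> {1..k+3} then (if j = 1 \<or> j = k+3 then u0 else g j) else undefined) \<in> V"
      proof (cases "j = 1 \<or> j = k+3")
        case True then show ?thesis using u0 j by simp
      next
        case False then show ?thesis using j gV[of j] by simp
      qed
    qed (auto simp: S_verts_def)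
    moreover have "E (f x) (f y)" if "S_edge k x y" for x y
    proof -
      have c: "(x = 1 \<and> 2 \<le> y \<and> y \<le> k + 2) \<or> (y = 1 \<and> 2 \<le> x \<and> x \<le> k + 2)
     \<or> (x = k + 2 \<and> y = k + 3) \<or> (y = k + 2 \<and> x = k + 3)" using that unfolding S_edge_def .
      then show ?thesis
      proof (elim disjE conjE)
        assume "x = 1" "2 \<le> y" "y \<le> k + 2"
        then show ?thesis unfolding f \<phi>_def using gN[of y] by simp
      next
        assume "y = 1" "2 \<le> x" "x \<le> k + 2"
        then show ?thesis unfolding f \<phi>_def using sym[OF gN[of x]] by simp
      next
        assume "x = k + 2" "y = k + 3"
        then show ?thesis unfolding f \<phi>_def using sym[OF gN[of x]] by simp
      next
        assume "y = k + 2" "x = k + 3"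
        then show ?thesis unfolding f \<phi>_def using gN[of y] by simp
      qed
    qed
    ultimately show "f \<in> ?H" by auto
  qed
  have inj: "inj_on \<phi> ({2..k+2} \<rightarrow>\<^sub>E ?N)"
  proof (rule inj_onI)
    fix g g' assume g: "g \<in> {2..k+2} \<rightarrow>\<^sub>E ?N" and g': "g' \<in> {2..k+2} \<rightarrow>\<^sub>E ?N"
      and eq: "\<phi> g = \<phi> g'"
    show "g = g'"
    proof
      fix j
      show "g j = g' j"
      proof (cases "j \<in> {2..k+2}")
        case True
        then have "\<phi> g j = g j" "\<phi> g' j = g' j" unfolding \<phi>_def by auto
        then show ?thesis using eq by metis
      next
        case False
        then show ?thesis using PiE_arb[OF g False] PiE_arb[OF g' False] by simp
      qed
    qed
  qed
  have "card ({2..k+2} \<rightarrow>\<^sub>E ?N) = card ?N ^ (k+1)"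
    by (simp add: card_PiE)
  moreover have "card ({2..k+2} \<rightarrow>\<^sub>E ?N) \<le> card ?H"
    using card_inj_on_le[OF inj img fin] .
  ultimately show ?thesis unfolding hom_count_def by simp
qed


lemma upperB:
  assumes G: "simple_graph V E" and D: "\<And>u. u \<in> V \<Longrightarrow> card {v. E u v} \<le> D"
  shows "hom_count (S_verts (k+1)) (S_edge (k+1)) V E \<le> D * hom_count (S_verts k) (S_edge k) V E"
proof -
  let ?H0 = "{f \<in> S_verts k \<rightarrow>\<^sub>E V. \<forall>x y. S_edge k x y \<longrightarrow> E (f x) (f y)}"
  let ?H1 = "{f \<in> S_verts (k+1) \<rightarrow>\<^sub>E V. \<forall>x y. S_edge (k+1) x y \<longrightarrow> E (f x) (f y)}"
  define \<psi> where "\<psi> f = ((\<lambda>j. if j \<in> {1..k+3} then (if j = 1 then f 1 else f (j+1)) else undefined), f (2::nat))" for f :: "nat \<Rightarrow> 'a"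
  let ?S = "Sigma ?H0 (\<lambda>f'. {v. E (f' 1) v})"
  have finV: "finite V" using G unfolding simple_graph_def by auto
  have EV: "\<And>x y. E x y \<Longrightarrow> y \<in> V" using G unfolding simple_graph_def by auto
  have fin0: "finite ?H0"
  proof (rule finite_subset)
    show "?H0 \<subseteq> S_verts k \<rightarrow>\<^sub>E V" by auto
    show "finite (S_verts k \<rightarrow>\<^sub>E V)" using finV unfolding S_verts_def
      by (intro finite_PiE) auto
  qed
  have finN: "\<And>u. finite {v. E u v}" 
  proof -
    fix u
    have "{v. E u v} \<subseteq> V" using EV by blast
    then show "finite {v. E u v}" using finV by (rule finite_subset)
  qed
  have finS: "finite ?S" using fin0 finN by (intro finite_SigmaI) auto
  have img: "\<psi> ` ?H1 \<subseteq> ?S"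
  proof
    fix p assume "p \<in> \<psi> ` ?H1"
    then obtain f where f: "f \<in> ?H1" and p: "p = \<psi> f" by auto
    have fV: "\<And>j. 1 \<le> j \<Longrightarrow> j \<le> k+4 \<Longrightarrow> f j \<in> V" using f unfolding S_verts_def by (simp add: PiE_iff)
    have fE: "\<And>x y. S_edge (k+1) x y \<Longrightarrow> E (f x) (f y)" using f by auto
    define f' where "f' = (\<lambda>j. if j \<in> {1..k+3} then (if j = 1 then f 1 else f (j+1)) else undefined)"
    have p2: "p = (f', f 2)" unfolding p \<psi>_def f'_def by simp
    have "f' \<in> S_verts k \<rightarrow>\<^sub>E V"
      unfolding f'_def S_verts_def
    proof (intro PiE_I)
      fix j assume j: "j \<in> {1..k+3}"
      show "(if j \<in> {1..k+3} then (if j = 1 then f 1 else f (j+1)) else undefined) \<in> V"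
      proof (cases "j = 1")
        case True then show ?thesis using j fV[of 1] by simp
      next
        case False
        have "1 \<le> j+1" "j+1 \<le> k+4" using j by auto
        then show ?thesis using j False fV[of "j+1"] by simp
      qed
    qed (auto simp: S_verts_def)
    moreover have "E (f' x) (f' y)" if "S_edge k x y" for x y
    proof -
      have c: "(x = 1 \<and> 2 \<le> y \<and> y \<le> k + 2) \<or> (y = 1 \<and> 2 \<le> x \<and> x \<le> k + 2)
     \<or> (x = k + 2 \<and> y = k + 3) \<or> (y = k + 2 \<and> x = k + 3)" using that unfolding S_edge_def .
      then show ?thesis
      proof (elim disjE conjE)
        assume "x = 1" "2 \<le> y" "y \<le> k + 2"
        moreover then have "S_edge (k+1) 1 (y+1)" unfolding S_edge_def by simp
        ultimately show ?thesis unfolding f'_def using fE by simp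
      next
        assume "y = 1" "2 \<le> x" "x \<le> k + 2"
        moreover then have "S_edge (k+1) (x+1) 1" unfolding S_edge_def by simp
        ultimately show ?thesis unfolding f'_def using fE by simp
      next
        assume "x = k + 2" "y = k + 3"
        moreover have "S_edge (k+1) (k+3) (k+4)" unfolding S_edge_def by simp
        ultimately show ?thesis unfolding f'_def using fE
          by (simp add: numeral_eq_Suc)
      next
        assume "y = k + 2" "x = k + 3"
        moreover have "S_edge (k+1) (k+4) (k+3)" unfolding S_edge_def by simp
        ultimately show ?thesis unfolding f'_def using fE
          by (simp add: numeral_eq_Suc)
      qed
    qed
    ultimately have H0: "f' \<in> ?H0" by blast
    moreover have "f' 1 = f 1" unfolding f'_def by simp
    moreover have "S_edge (k+1) 1 2" unfolding S_edge_def by simp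
    ultimately show "p \<in> ?S" using p2 fE[of 1 2] H0 by simp
  qed
  have inj: "inj_on \<psi> ?H1"
  proof (rule inj_onI)
    fix f g assume f: "f \<in> ?H1" and g: "g \<in> ?H1" and eq: "\<psi> f = \<psi> g"
    have e1: "\<And>j. j \<in> {1..k+3} \<Longrightarrow> (if j = 1 then f 1 else f (j+1)) = (if j = 1 then g 1 else g (j+1))"
    proof -
      fix j :: nat assume j: "j \<in> {1..k+3}"
      have "fst (\<psi> f) j = fst (\<psi> g) j" using eq by simp
      then show "(if j = 1 then f 1 else f (j+1)) = (if j = 1 then g 1 else g (j+1))"
        using j unfolding \<psi>_def by simp
    qed
    have e2: "f 2 = g 2" using eq unfolding \<psi>_def by simp
    show "f = g"
    proof
      fix j :: nat
      show "f j = g j"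
      proof (cases "j \<in> {1..k+4}")
        case False
        then have nj: "j \<notin> S_verts (k+1)" unfolding S_verts_def by auto
        have "f \<in> S_verts (k+1) \<rightarrow>\<^sub>E V" "g \<in> S_verts (k+1) \<rightarrow>\<^sub>E V" using f g by blast+
        then show ?thesis using PiE_arb[OF _ nj] by metis
      next
        case True
        show ?thesis
        proof (cases "j = 1")
          case True then show ?thesis using e1[of 1] by simp
        next
          case n1: False
          show ?thesis
          proof (cases "j = 2")
            case True then show ?thesis using e2 by simp
          next
            case False
            then have "j - 1 \<in> {1..k+3}" "j - 1 \<noteq> 1" "j - 1 + 1 = j" using True n1 by auto
            then show ?thesis using e1[of "j - 1"] by simp
          qed
        qed
      qed
    qed
  qed
  have "card ?H1 \<le> card ?S" using card_inj_on_le[OF inj img finS] .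
  also have "card ?S = (\<Sum>f'\<in>?H0. card {v. E (f' 1) v})"
    using fin0 finN by (simp add: card_SigmaI)
  also have "\<dots> \<le> (\<Sum>f'\<in>?H0. D)"
  proof (rule sum_mono)
    fix f' assume "f' \<in> ?H0"
    then have "f' 1 \<in> V" unfolding S_verts_def by auto
    then show "card {v. E (f' 1) v} \<le> D" using D by simp
  qed
  also have "\<dots> = D * card ?H0" by simp
  finally show ?thesis unfolding hom_count_def .
qed


theorem theorem3p5:
  fixes V :: "'a set" and E :: "'a \<Rightarrow> 'a \<Rightarrow> bool" and m :: nat
  assumes "simple_graph V E" and "m \<ge> 2"
  shows "hom_count (S_verts (m - 2)) (S_edge (m - 2)) V E ^ m
           \<ge> hom_count (S_verts (m - 1)) (S_edge (m - 1)) V E ^ (m - 1)"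
proof -
  obtain k where k: "m = k + 2" using assms(2) by (metis add.commute le_Suc_ex)
  have m1: "m - 1 = k + 1" "m - 2 = k" using k by auto
  define h0 where "h0 = hom_count (S_verts k) (S_edge k) V E"
  define h1 where "h1 = hom_count (S_verts (k+1)) (S_edge (k+1)) V E"
  have fin: "finite V" using assms(1) unfolding simple_graph_def by auto
  show ?thesis
  proof (cases "V = {}")
    case True
    have "(1::nat) \<in> S_verts (k+1)" unfolding S_verts_def by simp
    then have "S_verts (k+1) \<rightarrow>\<^sub>E V = {}" using True by (auto simp: PiE_eq_empty_iff)
    then have "h1 = 0" unfolding h1_def hom_count_def by simp
    then show ?thesis unfolding m1 h1_def[symmetric] by simp
  next
    case False
    define D where "D = Max ((\<lambda>u. card {v. E u v}) ` V)"
    have Dge: "\<And>u. u \<in> V \<Longrightarrow> card {v. E u v} \<le> D" unfolding D_def using fin by simp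
    have "D \<in> (\<lambda>u. card {v. E u v}) ` V" unfolding D_def using fin False by (intro Max_in) auto
    then obtain u0 where u0: "u0 \<in> V" "D = card {v. E u0 v}" by auto
    have A: "D ^ (k+1) \<le> h0" unfolding h0_def u0(2) using lowerA[OF assms(1) u0(1)] .
    have B: "h1 \<le> D * h0" unfolding h0_def h1_def using upperB[OF assms(1) Dge] .
    have "h1 ^ (k+1) \<le> (D * h0) ^ (k+1)" using B by (rule power_mono) simp
    also have "\<dots> = D ^ (k+1) * h0 ^ (k+1)" by (simp add: power_mult_distrib)
    also have "\<dots> \<le> h0 * h0 ^ (k+1)" using A by (rule mult_right_mono) simp
    also have "\<dots> = h0 ^ m" using k by simp
    finally show ?thesis unfolding m1 h0_def[symmetric] h1_def[symmetric] .
  qed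
qed

end
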